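(* Let $f\in L_1(\mathbb{R})$ with $\hat f(t)\ne0$ for all $t\in\mathbb{R}$, and let $\Lambda=\{\lambda_n:n\in\mathbb{N}\}\subseteq\mathbb{R}$ be uniformly discrete. Then $(f_{(\lambda_n)})_{n\in\mathbb{N}}$ is a minimal system in $L_1(\mathbb{R})$ which is not fundamental in $L_1(\mathbb{R})$.
   Context: $\hat f$ is the Fourier transform of $f$. $f_{(\lambda)}(x)=f(x-\lambda)$. $\Lambda$ uniformly discrete: $\inf\{|\lambda-\lambda'|:\lambda\neq\lambda'\in\Lambda\}>0$. A sequence $(x_n)$ in a Banach space is a minimal system if $x_n\notin\overline{\mathrm{span}}\{x_m:m\ne n\}$ for all $n$; fundamental means its closed linear span is the whole space. *)

theory Defs
  imports "HOL-Analysis.Analysis"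
begin

text \<open>Elements of L1(R) are represented by Lebesgue-integrable functions real => complex
  (equality a.e. is handled implicitly: all notions below only use the L1 seminorm).\<close>

definition fourier_transform :: "(real \<Rightarrow> complex) \<Rightarrow> real \<Rightarrow> complex" where
  "fourier_transform f t = integral\<^sup>L lborel (\<lambda>x. f x * cis (- (2 * pi * t * x)))"

definition translate :: "(real \<Rightarrow> complex) \<Rightarrow> real \<Rightarrow> real \<Rightarrow> complex" where
  "translate f lam = (\<lambda>x. f (x - lam))"

definition uniformly_discrete :: "real set \<Rightarrow> bool" where
  "uniformly_discrete L \<longleftrightarrow> (\<exists>\<delta>>0. \<forall>a\<in>L. \<forall>b\<in>L. a \<noteq> b \<longrightarrow> \<delta> \<le> \<bar>a - b\<bar>)"

definition in_L1_closed_span :: "(nat \<Rightarrow> real \<Rightarrow> complex) \<Rightarrow> nat set \<Rightarrow> (real \<Rightarrow> complex) \<Rightarrow> bool" where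
  "in_L1_closed_span xs A g \<longleftrightarrow> integrable lborel g \<and>
     (\<forall>\<epsilon>>0. \<exists>F c. finite F \<and> F \<subseteq> A \<and>
        (\<integral>x. cmod (g x - (\<Sum>n\<in>F. c n * xs n x)) \<partial>lborel) < \<epsilon>)"

definition L1_minimal_system :: "(nat \<Rightarrow> real \<Rightarrow> complex) \<Rightarrow> bool" where
  "L1_minimal_system xs \<longleftrightarrow> (\<forall>n. \<not> in_L1_closed_span xs (UNIV - {n}) (xs n))"

definition L1_fundamental :: "(nat \<Rightarrow> real \<Rightarrow> complex) \<Rightarrow> bool" where
  "L1_fundamental xs \<longleftrightarrow> (\<forall>g. integrable lborel g \<longrightarrow> in_L1_closed_span xs UNIV g)"

end

theory Submission
  imports Defs
begin


lemma measurable_cis [measurable]: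
  "g \<in> borel_measurable M \<Longrightarrow> (\<lambda>x. cis (g x)) \<in> borel_measurable M"
  by (rule borel_measurable_continuous_on) (auto intro!: continuous_intros simp: cis_conv_exp)

lemma FT_cont:
  assumes f: "integrable lborel f"
  shows "isCont (fourier_transform f) t"
  unfolding continuous_at_sequentially
proof safe
  fix X assume X: "X \<longlonglongrightarrow> t"
  have [measurable]: "f \<in> borel_measurable borel"
      using borel_measurable_integrable[OF f] by simp
  show "(fourier_transform f \<circ> X) \<longlonglongrightarrow> fourier_transform f t"
    unfolding comp_def fourier_transform_def
    proof (rule integral_dominated_convergence[where w="\<lambda>x. norm (f x)" and M=lborel and s="\<lambda>i x. f x * cis (- (2 * pi * X i * x))" and f="\<lambda>x. f x * cis (- (2 * pi * t * x))"])
      show "integrable lborel (\<lambda>x. norm (f x))" using f by simp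
      show "AE x in lborel. (\<lambda>i. f x * cis (- (2 * pi * X i * x))) \<longlonglongrightarrow> f x * cis (- (2 * pi * t * x))"
        by (intro AE_I2 tendsto_intros X)
      show "\<And>i. AE x in lborel. norm (f x * cis (- (2 * pi * X i * x))) \<le> norm (f x)"
        by (simp add: norm_mult)
    qed measurable
qed

lemma FT_translate:
  assumes f: "integrable lborel f"
  shows "integral\<^sup>L lborel (\<lambda>x. translate f lam x * cis (- (2 * pi * t * x)))
       = cis (- (2 * pi * t * lam)) * fourier_transform f t"
proof -
  have "integral\<^sup>L lborel (\<lambda>x. translate f lam x * cis (- (2 * pi * t * x)))
     = integral\<^sup>L lborel (\<lambda>x. translate f lam (lam + 1 * x) * cis (- (2 * pi * t * (lam + 1 * x))))"
    using lborel_integral_real_affine[of 1 "\<lambda>x. translate f lam x * cis (- (2 * pi * t * x))" lam]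
    by simp
  also have "\<dots> = integral\<^sup>L lborel (\<lambda>x. cis (- (2 * pi * t * lam)) * (f x * cis (- (2 * pi * t * x))))"
  proof (rule Bochner_Integration.integral_cong)
    fix x
    have e: "- (2 * pi * t * (lam + 1 * x)) = - (2 * pi * t * lam) + - (2 * pi * t * x)"
      by (simp add: algebra_simps)
    show "translate f lam (lam + 1 * x) * cis (- (2 * pi * t * (lam + 1 * x))) =
          cis (- (2 * pi * t * lam)) * (f x * cis (- (2 * pi * t * x)))"
      unfolding e cis_mult[symmetric] by (simp add: translate_def)
  qed simp
  also have "\<dots> = cis (- (2 * pi * t * lam)) * fourier_transform f t"
    unfolding fourier_transform_def by simp
  finally show ?thesis .
qed

lemma integrable_translate:
  assumes f: "integrable lborel f"
  shows "integrable lborel (translate f lam)"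
  using lborel_integrable_real_affine[OF f, of 1 "-lam"] unfolding translate_def by simp




lemma FT_est:
  assumes f: "integrable lborel f" and F: "finite F"
  shows "cmod (fourier_transform f t * (cis (- (2 * pi * t * mu)) - (\<Sum>m\<in>F. c m * cis (- (2 * pi * t * lm m)))))
     \<le> (\<integral>x. cmod (translate f mu x - (\<Sum>m\<in>F. c m * translate f (lm m) x)) \<partial>lborel)"
proof -
  define E where "E = (\<lambda>x. cis (- (2 * pi * t * x)))"
  have intT: "\<And>l. integrable lborel (\<lambda>x. translate f l x * E x)"
  proof -
    fix l
    have [measurable]: "translate f l \<in> borel_measurable borel"
      using borel_measurable_integrable[OF integrable_translate[OF f, of l]] by simp
    show "integrable lborel (\<lambda>x. translate f l x * E x)"
      by (rule Bochner_Integration.integrable_bound[OF integrable_norm[OF integrable_translate[OF f, of l]]])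
         (auto simp: E_def norm_mult)
  qed
  have "(\<integral>x. (translate f mu x - (\<Sum>m\<in>F. c m * translate f (lm m) x)) * E x \<partial>lborel)
      = (\<integral>x. translate f mu x * E x - (\<Sum>m\<in>F. c m * (translate f (lm m) x * E x)) \<partial>lborel)"
    by (simp add: algebra_simps sum_distrib_right sum_distrib_left)
  also have "\<dots> = (\<integral>x. translate f mu x * E x \<partial>lborel) - (\<Sum>m\<in>F. c m * (\<integral>x. translate f (lm m) x * E x \<partial>lborel))"
    using intT by (simp add: Bochner_Integration.integral_diff Bochner_Integration.integral_sum)
  also have "\<dots> = fourier_transform f t * (cis (- (2 * pi * t * mu)) - (\<Sum>m\<in>F. c m * cis (- (2 * pi * t * lm m))))"
    unfolding E_def FT_translate[OF f] by (simp add: algebra_simps sum_distrib_left)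
  finally have eq: "fourier_transform f t * (cis (- (2 * pi * t * mu)) - (\<Sum>m\<in>F. c m * cis (- (2 * pi * t * lm m))))
     = (\<integral>x. (translate f mu x - (\<Sum>m\<in>F. c m * translate f (lm m) x)) * E x \<partial>lborel)" ..
  show ?thesis unfolding eq
    by (rule order_trans[OF integral_norm_bound]) (simp add: norm_mult E_def)
qed




lemma sum_inv_sq_upto: "n \<ge> 1 \<Longrightarrow> (\<Sum>k=1..n. 1 / (real k)^2) \<le> 2 - 1 / real n"
proof (induction n rule: dec_induct)
  case base then show ?case by simp
next
  case (step n)
  have "(\<Sum>k=1..Suc n. 1 / (real k)^2) = (\<Sum>k=1..n. 1 / (real k)^2) + 1 / (real (Suc n))^2"
    by simp
  also have "\<dots> \<le> 2 - 1 / real n + 1 / (real (Suc n))^2" using step by simp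
  also have "\<dots> \<le> 2 - 1 / real (Suc n)"
  proof -
    have n: "real n \<ge> 1" using step by simp
    have "1 / (real (Suc n))^2 \<le> 1 / real n - 1 / real (Suc n)"
    proof -
      have "1 / real n - 1 / real (Suc n) = 1 / (real n * real (Suc n))"
        using n by (simp add: field_simps)
      moreover have "real n * real (Suc n) \<le> (real (Suc n))^2"
        by (simp add: power2_eq_square)
      moreover have "0 < real n * real (Suc n)" using n by simp
      ultimately show ?thesis by (simp add: divide_left_mono)
    qed
    then show ?thesis by simp
  qed
  finally show ?case .
qed

lemma sum_inv_sq_nat:
  assumes "finite B" "0 \<notin> B"
  shows "(\<Sum>k\<in>B. 1 / (real k)^2) \<le> 2"
proof (cases "B = {}")
  case True then show ?thesis by simp
next
  case False
  have sub: "B \<subseteq> {1..Max B}" using assms by (auto simp: Suc_le_eq intro: Nat.gr0I)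
  have "(\<Sum>k\<in>B. 1 / (real k)^2) \<le> (\<Sum>k=1..Max B. 1 / (real k)^2)"
    by (rule sum_mono2[OF _ sub]) auto
  also have "\<dots> \<le> 2 - 1 / real (Max B)"
    using sub False by (intro sum_inv_sq_upto) auto
  also have "\<dots> \<le> 2" by simp
  finally show ?thesis .
qed

lemma sep_sum_pos:
  fixes A :: "real set"
  assumes d: "\<delta> > 0" and A: "finite A" and ge: "\<forall>a\<in>A. a \<ge> \<delta>"
    and sep: "\<forall>a\<in>A. \<forall>b\<in>A. a \<noteq> b \<longrightarrow> \<delta> \<le> \<bar>a - b\<bar>"
  shows "(\<Sum>a\<in>A. 1 / a^2) \<le> 2 / \<delta>^2"
proof -
  define k where "k = (\<lambda>a. nat \<lfloor>a / \<delta>\<rfloor>)"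
  have k1: "k a \<ge> 1" if "a \<in> A" for a
  proof -
    have "a / \<delta> \<ge> 1" using ge that d by (simp add: field_simps)
    then show ?thesis unfolding k_def by linarith
  qed
  have kle: "real (k a) * \<delta> \<le> a" if "a \<in> A" for a
  proof -
    have "real (k a) \<le> a / \<delta>" using k1[OF that] unfolding k_def by linarith
    then show ?thesis using d by (simp add: field_simps)
  qed
  have inj: "inj_on k A"
  proof (rule inj_onI)
    fix a b assume ab: "a \<in> A" "b \<in> A" "k a = k b"
    show "a = b"
    proof (rule ccontr)
      assume "a \<noteq> b"
      then have "\<delta> \<le> \<bar>a - b\<bar>" using sep ab by auto
      moreover have "a / \<delta> - b / \<delta> = (a - b) / \<delta>" by (simp add: diff_divide_distrib)
      moreover have "\<bar>(a - b) / \<delta>\<bar> = \<bar>a - b\<bar> / \<delta>" using d by simp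
      ultimately have "1 \<le> \<bar>a / \<delta> - b / \<delta>\<bar>" using d by (simp add: le_divide_eq)
      moreover have f1: "\<lfloor>a / \<delta>\<rfloor> \<ge> 0" "\<lfloor>b / \<delta>\<rfloor> \<ge> 0"
        using k1[OF ab(1)] k1[OF ab(2)] unfolding k_def by linarith+
      moreover have f2: "nat \<lfloor>a / \<delta>\<rfloor> = nat \<lfloor>b / \<delta>\<rfloor>" using ab(3) unfolding k_def .
      have "\<lfloor>a / \<delta>\<rfloor> = \<lfloor>b / \<delta>\<rfloor>" using f1 f2 eq_nat_nat_iff by blast
      ultimately show False by linarith
    qed
  qed
  have "(\<Sum>a\<in>A. 1 / a^2) \<le> (\<Sum>a\<in>A. (1 / \<delta>^2) * (1 / (real (k a))^2))"
  proof (rule sum_mono)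
    fix a assume a: "a \<in> A"
    have p: "0 < real (k a) * \<delta>" using k1[OF a] d by simp
    have "(real (k a) * \<delta>)^2 \<le> a^2" using kle[OF a] p by (intro power_mono) simp_all
    moreover have q: "0 < (real (k a) * \<delta>)^2" using p by (rule zero_less_power)
    moreover have "0 < a^2" using ge a d by force
    ultimately have "1 / a^2 \<le> 1 / (real (k a) * \<delta>)^2"
      by (intro divide_left_mono) (simp_all add: mult_pos_pos)
    then show "1 / a^2 \<le> (1 / \<delta>^2) * (1 / (real (k a))^2)"
      by (simp add: power_mult_distrib mult.commute)
  qed
  also have "\<dots> = (1 / \<delta>^2) * (\<Sum>j\<in>k ` A. 1 / (real j)^2)"
    by (simp add: sum_distrib_left sum.reindex[OF inj])
  also have "\<dots> \<le> (1 / \<delta>^2) * 2"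
    using k1 A by (intro mult_left_mono sum_inv_sq_nat) force+
  finally show ?thesis by simp
qed

lemma sep_sum:
  fixes S :: "real set"
  assumes d: "\<delta> > 0" and S: "finite S" and far: "\<forall>x\<in>S. \<delta> \<le> \<bar>x - \<nu>\<bar>"
    and sep: "\<forall>a\<in>S. \<forall>b\<in>S. a \<noteq> b \<longrightarrow> \<delta> \<le> \<bar>a - b\<bar>"
  shows "(\<Sum>x\<in>S. 1 / (x - \<nu>)^2) \<le> 4 / \<delta>^2"
proof -
  define P where "P = {x\<in>S. x > \<nu>}"
  define N where "N = {x\<in>S. x < \<nu>}"
  have SPN: "S = P \<union> N" using far d unfolding P_def N_def by force
  have PN: "P \<inter> N = {}" unfolding P_def N_def by auto
  have fP: "finite P" "finite N" using S unfolding P_def N_def by auto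
  have "(\<Sum>x\<in>P. 1 / (x - \<nu>)^2) = (\<Sum>a\<in>(\<lambda>x. x - \<nu>) ` P. 1 / a^2)"
    by (subst sum.reindex) (auto simp: inj_on_def)
  also have "\<dots> \<le> 2 / \<delta>^2"
    using far sep fP unfolding P_def by (intro sep_sum_pos d) auto
  finally have 1: "(\<Sum>x\<in>P. 1 / (x - \<nu>)^2) \<le> 2 / \<delta>^2" .
  have "(\<Sum>x\<in>N. 1 / (x - \<nu>)^2) = (\<Sum>a\<in>(\<lambda>x. \<nu> - x) ` N. 1 / a^2)"
    by (subst sum.reindex) (auto simp: inj_on_def power2_commute)
  also have "\<dots> \<le> 2 / \<delta>^2"
    using far sep fP unfolding N_def by (intro sep_sum_pos d) (auto simp: abs_minus_commute)
  finally have 2: "(\<Sum>x\<in>N. 1 / (x - \<nu>)^2) \<le> 2 / \<delta>^2" .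
  have "(\<Sum>x\<in>S. 1 / (x - \<nu>)^2) = (\<Sum>x\<in>P. 1 / (x - \<nu>)^2) + (\<Sum>x\<in>N. 1 / (x - \<nu>)^2)"
    unfolding SPN using fP PN by (rule sum.union_disjoint)
  also have "\<dots> \<le> 4 / \<delta>^2" using 1 2 by simp
  finally show ?thesis .
qed




lemma ftc_real:
  fixes F f :: "real \<Rightarrow> real"
  assumes "a \<le> b" "\<And>x. x \<in> {a..b} \<Longrightarrow> (F has_real_derivative f x) (at x)"
  shows "(f has_integral (F b - F a)) {a..b}"
proof (rule fundamental_theorem_of_calculus[OF assms(1)])
  fix x assume x: "x \<in> {a..b}"
  have "(F has_real_derivative f x) (at x within {a..b})"
    by (rule has_field_derivative_at_within[OF assms(2)[OF x]])
  then show "(F has_vector_derivative f x) (at x within {a..b})"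
    using has_real_derivative_iff_has_vector_derivative by blast
qed

definition tri :: "real \<Rightarrow> real \<Rightarrow> real" where "tri R t = 1 - \<bar>t\<bar> / R"

definition Wt :: "real \<Rightarrow> real \<Rightarrow> real" where
  "Wt R b = (if b = 0 then R else 2 * (1 - cos (b * R)) / (b^2 * R))"

lemma tri_cos_integral:
  assumes R: "R > 0"
  shows "((\<lambda>t. tri R t * cos (b * t)) has_integral Wt R b) {-R..R}"
proof (cases "b = 0")
  case True
  have 1: "((\<lambda>t. tri R t * cos (b * t)) has_integral ((\<lambda>t. t + t^2 / (2*R)) 0 - (\<lambda>t. t + t^2 / (2*R)) (-R))) {-R..0}"
  proof (rule ftc_real)
    fix x assume x: "x \<in> {-R..0}"
    have "((\<lambda>t. t + t^2 / (2*R)) has_real_derivative (1 + x / R)) (at x)"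
      using R by (auto intro!: derivative_eq_intros simp: field_simps)
    moreover have "1 + x / R = tri R x * cos (b * x)" using x True by (simp add: tri_def)
    ultimately show "((\<lambda>t. t + t^2 / (2*R)) has_real_derivative tri R x * cos (b * x)) (at x)" by simp
  qed (use R in auto)
  have 2: "((\<lambda>t. tri R t * cos (b * t)) has_integral ((\<lambda>t. t - t^2 / (2*R)) R - (\<lambda>t. t - t^2 / (2*R)) 0)) {0..R}"
  proof (rule ftc_real)
    fix x assume x: "x \<in> {0..R}"
    have "((\<lambda>t. t - t^2 / (2*R)) has_real_derivative (1 - x / R)) (at x)"
      using R by (auto intro!: derivative_eq_intros simp: field_simps)
    moreover have "1 - x / R = tri R x * cos (b * x)" using x True by (simp add: tri_def)
    ultimately show "((\<lambda>t. t - t^2 / (2*R)) has_real_derivative tri R x * cos (b * x)) (at x)" by simp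
  qed (use R in auto)
  have "R = ((\<lambda>t. t + t^2 / (2*R)) 0 - (\<lambda>t. t + t^2 / (2*R)) (-R)) + ((\<lambda>t. t - t^2 / (2*R)) R - (\<lambda>t. t - t^2 / (2*R)) 0)"
    using R by (simp add: field_simps power2_eq_square)
  then show ?thesis using has_integral_combine[OF _ _ 1 2] R True by (simp add: Wt_def)
next
  case False
  define F2 where "F2 = (\<lambda>t. (1 + t / R) * sin (b * t) / b + cos (b * t) / (b^2 * R))"
  define F1 where "F1 = (\<lambda>t. (1 - t / R) * sin (b * t) / b - cos (b * t) / (b^2 * R))"
  have 1: "((\<lambda>t. tri R t * cos (b * t)) has_integral (F2 0 - F2 (-R))) {-R..0}"
  proof (rule ftc_real)
    fix x assume x: "x \<in> {-R..0}"
    have "(F2 has_real_derivative (1 + x / R) * cos (b * x)) (at x)"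
      unfolding F2_def using R False
      by (auto intro!: derivative_eq_intros simp: field_simps power2_eq_square)
    moreover have "(1 + x / R) * cos (b * x) = tri R x * cos (b * x)" using x by (simp add: tri_def)
    ultimately show "(F2 has_real_derivative tri R x * cos (b * x)) (at x)" by simp
  qed (use R in auto)
  have 2: "((\<lambda>t. tri R t * cos (b * t)) has_integral (F1 R - F1 0)) {0..R}"
  proof (rule ftc_real)
    fix x assume x: "x \<in> {0..R}"
    have "(F1 has_real_derivative (1 - x / R) * cos (b * x)) (at x)"
      unfolding F1_def using R False
      by (auto intro!: derivative_eq_intros simp: field_simps power2_eq_square)
    moreover have "(1 - x / R) * cos (b * x) = tri R x * cos (b * x)" using x by (simp add: tri_def)
    ultimately show "(F1 has_real_derivative tri R x * cos (b * x)) (at x)" by simp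
  qed (use R in auto)
  have "(F2 0 - F2 (-R)) + (F1 R - F1 0) = Wt R b"
    using R False by (simp add: F1_def F2_def Wt_def field_simps)
  then show ?thesis using has_integral_combine[OF _ _ 1 2] R by simp
qed

lemma tri_sin_integral:
  assumes R: "R > 0"
  shows "((\<lambda>t. tri R t * sin (b * t)) has_integral 0) {-R..R}"
proof (cases "b = 0")
  case True
  then show ?thesis by simp
next
  case False
  define F2 where "F2 = (\<lambda>t. - (1 + t / R) * cos (b * t) / b + sin (b * t) / (b^2 * R))"
  define F1 where "F1 = (\<lambda>t. - (1 - t / R) * cos (b * t) / b - sin (b * t) / (b^2 * R))"
  have 1: "((\<lambda>t. tri R t * sin (b * t)) has_integral (F2 0 - F2 (-R))) {-R..0}"
  proof (rule ftc_real)
    fix x assume x: "x \<in> {-R..0}"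
    have "(F2 has_real_derivative (1 + x / R) * sin (b * x)) (at x)"
      unfolding F2_def using R False
      by (auto intro!: derivative_eq_intros simp: field_simps power2_eq_square)
    moreover have "(1 + x / R) * sin (b * x) = tri R x * sin (b * x)" using x by (simp add: tri_def)
    ultimately show "(F2 has_real_derivative tri R x * sin (b * x)) (at x)" by simp
  qed (use R in auto)
  have 2: "((\<lambda>t. tri R t * sin (b * t)) has_integral (F1 R - F1 0)) {0..R}"
  proof (rule ftc_real)
    fix x assume x: "x \<in> {0..R}"
    have "(F1 has_real_derivative (1 - x / R) * sin (b * x)) (at x)"
      unfolding F1_def using R False
      by (auto intro!: derivative_eq_intros simp: field_simps power2_eq_square)
    moreover have "(1 - x / R) * sin (b * x) = tri R x * sin (b * x)" using x by (simp add: tri_def)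
    ultimately show "(F1 has_real_derivative tri R x * sin (b * x)) (at x)" by simp
  qed (use R in auto)
  have "(F2 0 - F2 (-R)) + (F1 R - F1 0) = 0"
    using R False by (simp add: F1_def F2_def field_simps)
  then show ?thesis using has_integral_combine[OF _ _ 1 2] R by simp
qed

lemma tri_cis_integral:
  assumes R: "R > 0"
  shows "((\<lambda>t. complex_of_real (tri R t) * cis (b * t)) has_integral complex_of_real (Wt R b)) {-R..R}"
proof -
  have "((\<lambda>t. complex_of_real (tri R t * cos (b * t)) + \<i> * complex_of_real (tri R t * sin (b * t)))
        has_integral (complex_of_real (Wt R b) + \<i> * complex_of_real 0)) {-R..R}"
    by (intro has_integral_add has_integral_mult_right has_integral_of_real tri_cos_integral tri_sin_integral R)
  moreover have "\<And>t. complex_of_real (tri R t * cos (b * t)) + \<i> * complex_of_real (tri R t * sin (b * t))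
       = complex_of_real (tri R t) * cis (b * t)"
    by (simp add: complex_eq_iff)
  ultimately show ?thesis by simp
qed

lemma Wt_bound:
  assumes R: "R > 0" and b: "b \<noteq> 0"
  shows "\<bar>Wt R b\<bar> \<le> 4 / (b^2 * R)"
proof -
  have c: "0 \<le> 1 - cos (b * R)" "1 - cos (b * R) \<le> 2" using cos_le_one[of "b*R"] cos_ge_minus_one[of "b*R"] by linarith+
  have p: "0 < b^2 * R" using R b by simp
  have "\<bar>Wt R b\<bar> = 2 * (1 - cos (b * R)) / (b^2 * R)" using b c p by (simp add: Wt_def)
  also have "\<dots> \<le> 4 / (b^2 * R)" proof (rule divide_right_mono)
    show "2 * (1 - cos (b * R)) \<le> 4" using c by (smt (verit))
  qed (use p in simp)
  finally show ?thesis .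
qed




lemma quad_integral:
  assumes R: "R > 0" and S: "finite S"
  shows "((\<lambda>t. complex_of_real (tri R t * (cmod (\<Sum>\<nu>\<in>S. a \<nu> * cis (- (2 * pi * t * \<nu>))))^2))
     has_integral (\<Sum>\<nu>\<in>S. \<Sum>\<nu>'\<in>S. a \<nu> * cnj (a \<nu>') * complex_of_real (Wt R (- (2 * pi * (\<nu> - \<nu>')))))) {-R..R}"
proof -
  have eq: "complex_of_real (tri R t * (cmod (\<Sum>\<nu>\<in>S. a \<nu> * cis (- (2 * pi * t * \<nu>))))^2)
     = (\<Sum>\<nu>\<in>S. \<Sum>\<nu>'\<in>S. a \<nu> * cnj (a \<nu>') * (complex_of_real (tri R t) * cis (- (2 * pi * (\<nu> - \<nu>')) * t)))" for t
  proof -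
    have c: "cis (- (2 * pi * t * \<nu>)) * cis (- (- (2 * pi * t * \<nu>'))) = cis (- (2 * pi * (\<nu> - \<nu>')) * t)" for \<nu> \<nu>'
      unfolding cis_mult by (simp add: algebra_simps)
    have "complex_of_real (tri R t * (cmod (\<Sum>\<nu>\<in>S. a \<nu> * cis (- (2 * pi * t * \<nu>))))^2)
       = complex_of_real (tri R t) * ((\<Sum>\<nu>\<in>S. a \<nu> * cis (- (2 * pi * t * \<nu>))) * cnj (\<Sum>\<nu>\<in>S. a \<nu> * cis (- (2 * pi * t * \<nu>))))"
      by (simp only: of_real_mult complex_norm_square)
    also have "\<dots> = complex_of_real (tri R t) * (\<Sum>\<nu>\<in>S. \<Sum>\<nu>'\<in>S. (a \<nu> * cis (- (2 * pi * t * \<nu>))) * (cnj (a \<nu>') * cis (- (- (2 * pi * t * \<nu>')))))"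
      by (simp add: cnj_sum sum_product cis_cnj)
    also have "\<dots> = (\<Sum>\<nu>\<in>S. \<Sum>\<nu>'\<in>S. a \<nu> * cnj (a \<nu>') * (complex_of_real (tri R t) * (cis (- (2 * pi * t * \<nu>)) * cis (- (- (2 * pi * t * \<nu>'))))))"
      by (simp add: sum_distrib_left mult_ac)
    also have "\<dots> = (\<Sum>\<nu>\<in>S. \<Sum>\<nu>'\<in>S. a \<nu> * cnj (a \<nu>') * (complex_of_real (tri R t) * cis (- (2 * pi * (\<nu> - \<nu>')) * t)))"
      unfolding c ..
    finally show ?thesis .
  qed
  have "((\<lambda>t. \<Sum>\<nu>\<in>S. \<Sum>\<nu>'\<in>S. a \<nu> * cnj (a \<nu>') * (complex_of_real (tri R t) * cis (- (2 * pi * (\<nu> - \<nu>')) * t)))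
     has_integral (\<Sum>\<nu>\<in>S. \<Sum>\<nu>'\<in>S. a \<nu> * cnj (a \<nu>') * complex_of_real (Wt R (- (2 * pi * (\<nu> - \<nu>')))))) {-R..R}"
    by (intro has_integral_sum S has_integral_mult_right tri_cis_integral R)
  then show ?thesis unfolding eq .
qed

lemma quad_lower:
  fixes W :: "real \<Rightarrow> real \<Rightarrow> real" and a :: "real \<Rightarrow> complex"
  assumes S: "finite S" and diag: "\<And>\<nu>. \<nu> \<in> S \<Longrightarrow> W \<nu> \<nu> = R"
    and sym: "\<And>\<nu> \<nu>'. \<nu> \<in> S \<Longrightarrow> \<nu>' \<in> S \<Longrightarrow> W \<nu> \<nu>' = W \<nu>' \<nu>"
    and row: "\<And>\<nu>. \<nu> \<in> S \<Longrightarrow> (\<Sum>\<nu>'\<in>S - {\<nu>}. \<bar>W \<nu> \<nu>'\<bar>) \<le> B"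
  shows "(R - B) * (\<Sum>\<nu>\<in>S. (cmod (a \<nu>))^2) \<le> Re (\<Sum>\<nu>\<in>S. \<Sum>\<nu>'\<in>S. a \<nu> * cnj (a \<nu>') * complex_of_real (W \<nu> \<nu>'))"
proof -
  define M where "M = (\<lambda>\<nu> \<nu>'. if \<nu> = \<nu>' then 0 else \<bar>W \<nu> \<nu>'\<bar>)"
  define n where "n = (\<lambda>\<nu>. cmod (a \<nu>))"
  have pt: "(if \<nu> = \<nu>' then R * (n \<nu>)^2 else 0) - n \<nu> * n \<nu>' * M \<nu> \<nu>'
      \<le> Re (a \<nu> * cnj (a \<nu>') * complex_of_real (W \<nu> \<nu>'))" if "\<nu> \<in> S" "\<nu>' \<in> S" for \<nu> \<nu>'
  proof (cases "\<nu> = \<nu>'")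
    case True
    have "Re (a \<nu> * cnj (a \<nu>)) = (n \<nu>)^2"
      unfolding n_def complex_norm_square[symmetric] by simp
    then show ?thesis using True diag[OF that(1)] by (simp add: M_def)
  next
    case False
    have "- (n \<nu> * n \<nu>' * \<bar>W \<nu> \<nu>'\<bar>) \<le> - cmod (a \<nu> * cnj (a \<nu>') * complex_of_real (W \<nu> \<nu>'))"
      by (simp add: n_def norm_mult)
    also have "\<dots> \<le> Re (a \<nu> * cnj (a \<nu>') * complex_of_real (W \<nu> \<nu>'))"
      using abs_Re_le_cmod[of "a \<nu> * cnj (a \<nu>') * complex_of_real (W \<nu> \<nu>')"] by linarith
    finally show ?thesis using False by (simp add: M_def)
  qed
  have "(\<Sum>\<nu>\<in>S. \<Sum>\<nu>'\<in>S. (if \<nu> = \<nu>' then R * (n \<nu>)^2 else 0) - n \<nu> * n \<nu>' * M \<nu> \<nu>')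
      \<le> (\<Sum>\<nu>\<in>S. \<Sum>\<nu>'\<in>S. Re (a \<nu> * cnj (a \<nu>') * complex_of_real (W \<nu> \<nu>')))"
    using pt by (intro sum_mono) auto
  also have "\<dots> = Re (\<Sum>\<nu>\<in>S. \<Sum>\<nu>'\<in>S. a \<nu> * cnj (a \<nu>') * complex_of_real (W \<nu> \<nu>'))"
    by (simp add: Re_sum)
  finally have 1: "(\<Sum>\<nu>\<in>S. \<Sum>\<nu>'\<in>S. (if \<nu> = \<nu>' then R * (n \<nu>)^2 else 0) - n \<nu> * n \<nu>' * M \<nu> \<nu>')
      \<le> Re (\<Sum>\<nu>\<in>S. \<Sum>\<nu>'\<in>S. a \<nu> * cnj (a \<nu>') * complex_of_real (W \<nu> \<nu>'))" .
  have 2: "(\<Sum>\<nu>\<in>S. \<Sum>\<nu>'\<in>S. (if \<nu> = \<nu>' then R * (n \<nu>)^2 else 0)) = R * (\<Sum>\<nu>\<in>S. (n \<nu>)^2)"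
    using S by (simp add: sum_distrib_left)
  have Mnn: "0 \<le> M \<nu> \<nu>'" for \<nu> \<nu>' by (simp add: M_def)
  have Msym: "M \<nu> \<nu>' = M \<nu>' \<nu>" if "\<nu> \<in> S" "\<nu>' \<in> S" for \<nu> \<nu>'
    using sym[OF that] by (simp add: M_def)
  have rowM: "(\<Sum>\<nu>'\<in>S. M \<nu> \<nu>') \<le> B" if "\<nu> \<in> S" for \<nu>
  proof -
    have "(\<Sum>\<nu>'\<in>S. M \<nu> \<nu>') = M \<nu> \<nu> + (\<Sum>\<nu>'\<in>S - {\<nu>}. M \<nu> \<nu>')"
      using S that by (rule sum.remove)
    also have "\<dots> = (\<Sum>\<nu>'\<in>S - {\<nu>}. \<bar>W \<nu> \<nu>'\<bar>)"
      by (simp add: M_def)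
    finally show ?thesis using row[OF that] by simp
  qed
  have "(\<Sum>\<nu>\<in>S. \<Sum>\<nu>'\<in>S. n \<nu> * n \<nu>' * M \<nu> \<nu>')
      \<le> (\<Sum>\<nu>\<in>S. \<Sum>\<nu>'\<in>S. ((n \<nu>)^2 / 2) * M \<nu> \<nu>' + ((n \<nu>')^2 / 2) * M \<nu> \<nu>')"
  proof (intro sum_mono)
    fix \<nu> \<nu>'
    have "n \<nu> * n \<nu>' \<le> (n \<nu>)^2 / 2 + (n \<nu>')^2 / 2"
      using sum_squares_bound[of "n \<nu>" "n \<nu>'"] by (simp add: power2_eq_square)
    then have "n \<nu> * n \<nu>' * M \<nu> \<nu>' \<le> ((n \<nu>)^2 / 2 + (n \<nu>')^2 / 2) * M \<nu> \<nu>'"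
      using Mnn by (rule mult_right_mono)
    then show "n \<nu> * n \<nu>' * M \<nu> \<nu>' \<le> ((n \<nu>)^2 / 2) * M \<nu> \<nu>' + ((n \<nu>')^2 / 2) * M \<nu> \<nu>'"
      by (simp add: algebra_simps)
  qed
  also have "\<dots> = (\<Sum>\<nu>\<in>S. \<Sum>\<nu>'\<in>S. ((n \<nu>)^2 / 2) * M \<nu> \<nu>') + (\<Sum>\<nu>\<in>S. \<Sum>\<nu>'\<in>S. ((n \<nu>')^2 / 2) * M \<nu> \<nu>')"
    by (simp add: sum.distrib)
  also have "(\<Sum>\<nu>\<in>S. \<Sum>\<nu>'\<in>S. ((n \<nu>')^2 / 2) * M \<nu> \<nu>') = (\<Sum>\<nu>'\<in>S. \<Sum>\<nu>\<in>S. ((n \<nu>')^2 / 2) * M \<nu>' \<nu>)"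
    by (subst sum.swap) (intro sum.cong refl, simp add: Msym)
  also have "(\<Sum>\<nu>\<in>S. \<Sum>\<nu>'\<in>S. ((n \<nu>)^2 / 2) * M \<nu> \<nu>') + (\<Sum>\<nu>'\<in>S. \<Sum>\<nu>\<in>S. ((n \<nu>')^2 / 2) * M \<nu>' \<nu>)
      = (\<Sum>\<nu>\<in>S. (n \<nu>)^2 * (\<Sum>\<nu>'\<in>S. M \<nu> \<nu>'))"
  proof -
    have h: "(\<Sum>\<nu>\<in>S. \<Sum>\<nu>'\<in>S. ((n \<nu>)^2 / 2) * M \<nu> \<nu>') = (\<Sum>\<nu>\<in>S. ((n \<nu>)^2 / 2) * (\<Sum>\<nu>'\<in>S. M \<nu> \<nu>'))"
      by (simp add: sum_distrib_left)
    have "(\<Sum>\<nu>\<in>S. (n \<nu>)^2 * (\<Sum>\<nu>'\<in>S. M \<nu> \<nu>')) = (\<Sum>\<nu>\<in>S. ((n \<nu>)^2 / 2) * (\<Sum>\<nu>'\<in>S. M \<nu> \<nu>') + ((n \<nu>)^2 / 2) * (\<Sum>\<nu>'\<in>S. M \<nu> \<nu>'))"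
      by (intro sum.cong refl) (simp add: algebra_simps)
    also have "\<dots> = (\<Sum>\<nu>\<in>S. ((n \<nu>)^2 / 2) * (\<Sum>\<nu>'\<in>S. M \<nu> \<nu>')) + (\<Sum>\<nu>\<in>S. ((n \<nu>)^2 / 2) * (\<Sum>\<nu>'\<in>S. M \<nu> \<nu>'))"
      by (rule sum.distrib)
    finally show ?thesis using h by simp
  qed
  also have "\<dots> \<le> (\<Sum>\<nu>\<in>S. (n \<nu>)^2 * B)"
    using rowM by (intro sum_mono mult_left_mono) auto
  finally have 3: "(\<Sum>\<nu>\<in>S. \<Sum>\<nu>'\<in>S. n \<nu> * n \<nu>' * M \<nu> \<nu>') \<le> B * (\<Sum>\<nu>\<in>S. (n \<nu>)^2)"
    by (simp add: sum_distrib_left mult_ac)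
  have "(R - B) * (\<Sum>\<nu>\<in>S. (n \<nu>)^2) \<le>
     (\<Sum>\<nu>\<in>S. \<Sum>\<nu>'\<in>S. (if \<nu> = \<nu>' then R * (n \<nu>)^2 else 0)) - (\<Sum>\<nu>\<in>S. \<Sum>\<nu>'\<in>S. n \<nu> * n \<nu>' * M \<nu> \<nu>')"
    using 2 3 by (simp add: algebra_simps)
  also have "\<dots> = (\<Sum>\<nu>\<in>S. \<Sum>\<nu>'\<in>S. (if \<nu> = \<nu>' then R * (n \<nu>)^2 else 0) - n \<nu> * n \<nu>' * M \<nu> \<nu>')"
    by (simp add: sum_subtractf)
  finally show ?thesis using 1 unfolding n_def by linarith
qed




lemma Wt_sym: "Wt R (- b) = Wt R b"
  by (simp add: Wt_def)

lemma exp_sum_large: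
  fixes S :: "real set" and a :: "real \<Rightarrow> complex"
  assumes d: "\<delta> > 0" and S: "finite S"
    and sep: "\<forall>x\<in>S. \<forall>y\<in>S. x \<noteq> y \<longrightarrow> \<delta> \<le> \<bar>x - y\<bar>"
    and mu: "\<mu> \<in> S" and a1: "a \<mu> = 1"
  shows "\<exists>t\<in>{-(2/\<delta>)..2/\<delta>}. 1/4 < cmod (\<Sum>\<nu>\<in>S. a \<nu> * cis (- (2 * pi * t * \<nu>)))"
proof (rule ccontr)
  assume "\<not> ?thesis"
  then have small: "\<And>t. t \<in> {-(2/\<delta>)..2/\<delta>} \<Longrightarrow> cmod (\<Sum>\<nu>\<in>S. a \<nu> * cis (- (2 * pi * t * \<nu>))) \<le> 1/4"
    by force
  define R where "R = 2 / \<delta>"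
  have R: "R > 0" using d by (simp add: R_def)
  define Q where "Q = (\<lambda>t. \<Sum>\<nu>\<in>S. a \<nu> * cis (- (2 * pi * t * \<nu>)))"
  define g where "g = (\<lambda>t. tri R t * (cmod (Q t))^2)"
  define I where "I = (\<Sum>\<nu>\<in>S. \<Sum>\<nu>'\<in>S. a \<nu> * cnj (a \<nu>') * complex_of_real (Wt R (- (2 * pi * (\<nu> - \<nu>')))))"
  have ci: "((\<lambda>t. complex_of_real (g t)) has_integral I) {-R..R}"
    unfolding g_def Q_def I_def by (rule quad_integral[OF R S])
  have gi: "(g has_integral Re I) {-R..R}"
    using has_integral_linear[OF ci bounded_linear_Re] by (simp add: o_def)
  have gle: "g t \<le> 1/16" if t: "t \<in> {-R..R}" for t
  proof -
    have tr: "0 \<le> tri R t" "tri R t \<le> 1" using t R by (auto simp: tri_def field_simps)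
    have q: "cmod (Q t) \<le> 1/4" using small[of t] t unfolding Q_def R_def by simp
    have "(cmod (Q t))^2 \<le> (1/4)^2" by (rule power_mono[OF q norm_ge_zero])
    then have "tri R t * (cmod (Q t))^2 \<le> 1 * (1/4)^2"
      using tr by (intro mult_mono) auto
    then show ?thesis by (simp add: g_def power2_eq_square)
  qed
  have "Re I \<le> measure lborel {-R..R} *\<^sub>R (1/16)"
    by (rule has_integral_le[OF gi has_integral_const_real gle])
  then have up: "Re I \<le> R / 8" using R by simp
  define W where "W = (\<lambda>\<nu> \<nu>'. Wt R (- (2 * pi * (\<nu> - \<nu>'))))"
  define B where "B = (1 / (pi^2 * R)) * (4 / \<delta>^2)"
  have row: "(\<Sum>\<nu>'\<in>S - {\<nu>}. \<bar>W \<nu> \<nu>'\<bar>) \<le> B" if nu: "\<nu> \<in> S" for \<nu>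
  proof -
    have "(\<Sum>\<nu>'\<in>S - {\<nu>}. \<bar>W \<nu> \<nu>'\<bar>) \<le> (\<Sum>\<nu>'\<in>S - {\<nu>}. (1 / (pi^2 * R)) * (1 / (\<nu>' - \<nu>)^2))"
    proof (rule sum_mono)
      fix \<nu>' assume "\<nu>' \<in> S - {\<nu>}"
      then have ne: "\<nu>' \<noteq> \<nu>" by auto
      have b: "- (2 * pi * (\<nu> - \<nu>')) \<noteq> 0" using ne by simp
      have "\<bar>W \<nu> \<nu>'\<bar> \<le> 4 / ((- (2 * pi * (\<nu> - \<nu>')))^2 * R)"
        unfolding W_def by (rule Wt_bound[OF R b])
      also have "\<dots> = (1 / (pi^2 * R)) * (1 / (\<nu>' - \<nu>)^2)"
      proof -
        have e: "(- (2 * pi * (\<nu> - \<nu>')))^2 * R = 4 * ((pi^2 * R) * (\<nu>' - \<nu>)^2)"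
          by (simp add: power2_eq_square algebra_simps)
        show ?thesis unfolding e by simp
      qed
      finally show "\<bar>W \<nu> \<nu>'\<bar> \<le> (1 / (pi^2 * R)) * (1 / (\<nu>' - \<nu>)^2)" .
    qed
    also have "\<dots> = (1 / (pi^2 * R)) * (\<Sum>\<nu>'\<in>S - {\<nu>}. 1 / (\<nu>' - \<nu>)^2)"
      by (simp add: sum_distrib_left)
    also have "\<dots> \<le> (1 / (pi^2 * R)) * (4 / \<delta>^2)"
    proof (rule mult_left_mono)
      show "(\<Sum>\<nu>'\<in>S - {\<nu>}. 1 / (\<nu>' - \<nu>)^2) \<le> 4 / \<delta>^2"
        using sep nu S by (intro sep_sum d) auto
    qed (use R in simp)
    finally show ?thesis unfolding B_def .
  qed
  have diag: "W \<nu> \<nu> = R" for \<nu> by (simp add: W_def Wt_def)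
  have sym: "W \<nu> \<nu>' = W \<nu>' \<nu>" for \<nu> \<nu>'
    unfolding W_def using Wt_sym[of R "2 * pi * (\<nu> - \<nu>')"] by (simp add: algebra_simps)
  have low: "(R - B) * (\<Sum>\<nu>\<in>S. (cmod (a \<nu>))^2) \<le> Re I"
  proof -
    have "(R - B) * (\<Sum>\<nu>\<in>S. (cmod (a \<nu>))^2) \<le> Re (\<Sum>\<nu>\<in>S. \<Sum>\<nu>'\<in>S. a \<nu> * cnj (a \<nu>') * complex_of_real (W \<nu> \<nu>'))"
      by (rule quad_lower[OF S diag sym row])
    then show ?thesis unfolding I_def W_def .
  qed
  have Bl: "B \<le> R / 2"
  proof -
    have "(2::real) \<le> 3 * 3" by simp
    also have "(3::real) * 3 \<le> pi * pi" using pi_gt3 by (intro mult_mono) auto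
    finally have pi2: "pi^2 \<ge> 2" by (simp add: power2_eq_square)
    have "B = 2 / (pi^2 * \<delta>)" using d by (simp add: B_def R_def field_simps power2_eq_square)
    also have "\<dots> \<le> 2 / (2 * \<delta>)" using pi2 d by (intro divide_left_mono mult_right_mono) auto
    also have "\<dots> = R / 2" using d by (simp add: R_def)
    finally show ?thesis .
  qed
  have s1: "1 \<le> (\<Sum>\<nu>\<in>S. (cmod (a \<nu>))^2)"
    using member_le_sum[of \<mu> S "\<lambda>\<nu>. (cmod (a \<nu>))^2", OF mu _ S] a1 by simp
  have "R / 2 \<le> (R - B) * 1" using Bl by simp
  also have "\<dots> \<le> (R - B) * (\<Sum>\<nu>\<in>S. (cmod (a \<nu>))^2)"
    using s1 Bl R by (intro mult_left_mono) auto
  also have "\<dots> \<le> Re I" by (rule low)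
  finally show False using up R by simp
qed




lemma not_in_span:
  fixes f :: "real \<Rightarrow> complex" and lam :: "nat \<Rightarrow> real"
  assumes f: "integrable lborel f" and ft: "\<forall>t. fourier_transform f t \<noteq> 0"
    and inj: "inj_on lam A" and mu: "\<mu> \<notin> lam ` A" and d: "\<delta> > 0"
    and sep: "\<forall>x\<in>insert \<mu> (lam ` A). \<forall>y\<in>insert \<mu> (lam ` A). x \<noteq> y \<longrightarrow> \<delta> \<le> \<bar>x - y\<bar>"
  shows "\<not> in_L1_closed_span (\<lambda>n. translate f (lam n)) A (translate f \<mu>)"
proof
  assume span: "in_L1_closed_span (\<lambda>n. translate f (lam n)) A (translate f \<mu>)"
  define R where "R = 2 / \<delta>"
  have R: "R > 0" using d by (simp add: R_def)
  have cont: "continuous_on {-R..R} (\<lambda>t. cmod (fourier_transform f t))"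
    by (intro continuous_at_imp_continuous_on ballI continuous_intros FT_cont f)
  obtain t0 where t0: "t0 \<in> {-R..R}" and t0min: "\<And>t. t \<in> {-R..R} \<Longrightarrow> cmod (fourier_transform f t0) \<le> cmod (fourier_transform f t)"
    using continuous_attains_inf[OF compact_Icc _ cont] R by force
  define c0 where "c0 = cmod (fourier_transform f t0)"
  have c0: "c0 > 0" using ft unfolding c0_def by simp
  obtain F c where F: "finite F" "F \<subseteq> A"
    and approx: "(\<integral>x. cmod (translate f \<mu> x - (\<Sum>n\<in>F. c n * translate f (lam n) x)) \<partial>lborel) < c0 / 4"
    using span c0 unfolding in_L1_closed_span_def by (meson zero_less_divide_iff zero_less_numeral)
  define S where "S = insert \<mu> (lam ` F)"
  define a where "a = (\<lambda>\<nu>. if \<nu> = \<mu> then 1 else - c (inv_into F lam \<nu>))"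
  have injF: "inj_on lam F" using inj F(2) by (rule inj_on_subset)
  have muF: "\<mu> \<notin> lam ` F" using mu F(2) by auto
  have sepS: "\<forall>x\<in>S. \<forall>y\<in>S. x \<noteq> y \<longrightarrow> \<delta> \<le> \<bar>x - y\<bar>"
    using sep F(2) unfolding S_def by blast
  obtain t where t: "t \<in> {-(2/\<delta>)..2/\<delta>}" and big: "1/4 < cmod (\<Sum>\<nu>\<in>S. a \<nu> * cis (- (2 * pi * t * \<nu>)))"
    using exp_sum_large[OF d _ sepS, of \<mu> a] F(1) unfolding S_def a_def by auto
  have eqQ: "(\<Sum>\<nu>\<in>S. a \<nu> * cis (- (2 * pi * t * \<nu>)))
      = cis (- (2 * pi * t * \<mu>)) - (\<Sum>m\<in>F. c m * cis (- (2 * pi * t * lam m)))"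
  proof -
    have "(\<Sum>\<nu>\<in>S. a \<nu> * cis (- (2 * pi * t * \<nu>))) = a \<mu> * cis (- (2 * pi * t * \<mu>)) + (\<Sum>\<nu>\<in>lam ` F. a \<nu> * cis (- (2 * pi * t * \<nu>)))"
      unfolding S_def using F(1) muF by simp
    also have "(\<Sum>\<nu>\<in>lam ` F. a \<nu> * cis (- (2 * pi * t * \<nu>))) = (\<Sum>m\<in>F. a (lam m) * cis (- (2 * pi * t * lam m)))"
      by (rule sum.reindex[OF injF, unfolded comp_def])
    also have "\<dots> = (\<Sum>m\<in>F. - (c m * cis (- (2 * pi * t * lam m))))"
    proof (rule sum.cong[OF refl])
      fix m assume m: "m \<in> F"
      have "lam m \<noteq> \<mu>" using muF m by auto
      then show "a (lam m) * cis (- (2 * pi * t * lam m)) = - (c m * cis (- (2 * pi * t * lam m)))"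
        unfolding a_def using inv_into_f_f[OF injF m] by simp
    qed
    finally show ?thesis by (simp add: a_def sum_negf)
  qed
  have tR: "t \<in> {-R..R}" using t unfolding R_def .
  have "cmod (fourier_transform f t * (cis (- (2 * pi * t * \<mu>)) - (\<Sum>m\<in>F. c m * cis (- (2 * pi * t * lam m)))))
       < c0 / 4"
    using FT_est[OF f F(1), of t \<mu> c lam] approx by linarith
  then have "cmod (fourier_transform f t) * cmod (\<Sum>\<nu>\<in>S. a \<nu> * cis (- (2 * pi * t * \<nu>))) < c0 / 4"
    unfolding eqQ by (simp add: norm_mult)
  moreover have "c0 * cmod (\<Sum>\<nu>\<in>S. a \<nu> * cis (- (2 * pi * t * \<nu>))) \<le> cmod (fourier_transform f t) * cmod (\<Sum>\<nu>\<in>S. a \<nu> * cis (- (2 * pi * t * \<nu>)))"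
    using t0min[OF tR] unfolding c0_def by (intro mult_right_mono) auto
  moreover have "c0 / 4 < c0 * cmod (\<Sum>\<nu>\<in>S. a \<nu> * cis (- (2 * pi * t * \<nu>)))"
    using big c0 by (simp add: field_simps)
  ultimately show False by linarith
qed

theorem lemma3p3:
  fixes f :: "real \<Rightarrow> complex" and lam :: "nat \<Rightarrow> real"
  assumes "integrable lborel f"
    and "\<forall>t. fourier_transform f t \<noteq> 0"
    and "inj lam"
    and "uniformly_discrete (range lam)"
  shows "L1_minimal_system (\<lambda>n. translate f (lam n)) \<and>
         \<not> L1_fundamental (\<lambda>n. translate f (lam n))"
proof
  obtain \<delta> where d: "\<delta> > 0" and sep: "\<forall>a\<in>range lam. \<forall>b\<in>range lam. a \<noteq> b \<longrightarrow> \<delta> \<le> \<bar>a - b\<bar>"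
    using assms(4) unfolding uniformly_discrete_def by blast
  show "L1_minimal_system (\<lambda>n. translate f (lam n))"
    unfolding L1_minimal_system_def
  proof
    fix n
    have inj: "inj_on lam (UNIV - {n})" using assms(3) by (rule inj_on_subset) simp
    have mu: "lam n \<notin> lam ` (UNIV - {n})" using assms(3) by (auto dest: injD)
    have sep': "\<forall>x\<in>insert (lam n) (lam ` (UNIV - {n})). \<forall>y\<in>insert (lam n) (lam ` (UNIV - {n})). x \<noteq> y \<longrightarrow> \<delta> \<le> \<bar>x - y\<bar>"
      using sep by blast
    show "\<not> in_L1_closed_span (\<lambda>n. translate f (lam n)) (UNIV - {n}) (translate f (lam n))"
      by (rule not_in_span[OF assms(1,2) inj mu d sep'])
  qed
  show "\<not> L1_fundamental (\<lambda>n. translate f (lam n))"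
  proof
    assume fund: "L1_fundamental (\<lambda>n. translate f (lam n))"
    define \<mu> where "\<mu> = lam 0 + \<delta> / 2"
    have far: "\<delta> / 2 \<le> \<bar>lam m - \<mu>\<bar>" for m
    proof (cases "lam m = lam 0")
      case True then show ?thesis using d by (simp add: \<mu>_def)
    next
      case False
      then have "\<delta> \<le> \<bar>lam m - lam 0\<bar>" using sep by blast
      then show ?thesis unfolding \<mu>_def by linarith
    qed
    have d2: "\<delta> / 2 > 0" using d by simp
    have mu: "\<mu> \<notin> lam ` UNIV"
    proof
      assume "\<mu> \<in> lam ` UNIV"
      then obtain m where "\<mu> = lam m" by auto
      then show False using far[of m] d2 by simp
    qed
    have sep': "\<forall>x\<in>insert \<mu> (lam ` UNIV). \<forall>y\<in>insert \<mu> (lam ` UNIV). x \<noteq> y \<longrightarrow> \<delta> / 2 \<le> \<bar>x - y\<bar>"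
    proof (intro ballI impI)
      fix x y assume x: "x \<in> insert \<mu> (range lam)" and y: "y \<in> insert \<mu> (range lam)" and xy: "x \<noteq> y"
      show "\<delta> / 2 \<le> \<bar>x - y\<bar>"
      proof (cases "x = \<mu>")
        case True
        then obtain m where "y = lam m" using y xy by auto
        then show ?thesis using far[of m] True by (simp add: abs_minus_commute)
      next
        case False
        then obtain m where xm: "x = lam m" using x by auto
        show ?thesis
        proof (cases "y = \<mu>")
          case True then show ?thesis using far[of m] xm by simp
        next
          case False
          then have "y \<in> range lam" using y by auto
          then have "\<delta> \<le> \<bar>x - y\<bar>" using sep xm xy by blast
          then show ?thesis using d by linarith
        qed
      qed
    qed
    have "\<not> in_L1_closed_span (\<lambda>n. translate f (lam n)) UNIV (translate f \<mu>)"
      by (rule not_in_span[OF assms(1,2) _ mu d2 sep']) (use assms(3) in simp)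
    moreover have "integrable lborel (translate f \<mu>)" by (rule integrable_translate[OF assms(1)])
    ultimately show False using fund unfolding L1_fundamental_def by blast
  qed
qed


end
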